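(* For all $m\geq 2$: $s_{1,m}(211,213)=1$, $s_{2,m}(211,213)=m+1$, and for all $n\geq 3$, \[ s_{n,m}(211,213)=2\,s_{n-1,m}(211,213)+s_{n-2,m}(211,213). \]
   Context: $[n]_m=\{1^m,\ldots,n^m\}$; a permutation of $[n]_m$ is a sequence of length $nm$ in which each element of $[n]$ appears exactly $m$ times. A sequence avoids a pattern $\pi$ if it has no subsequence order-isomorphic to $\pi$ (same relative order and same equalities among entries). $s_{n,m}(\Pi)$ is the number of permutations of $[n]_m$ avoiding all patterns in $\Pi$. *)

theory Defs
  imports Main "HOL-Library.Sublist"
begin

definition order_iso :: "nat list \<Rightarrow> nat list \<Rightarrow> bool" where
  "order_iso u v \<longleftrightarrow> length u = length v \<and>
     (\<forall>i<length u. \<forall>j<length u. (u ! i < u ! j \<longleftrightarrow> v ! i < v ! j))"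

definition contains_pattern :: "nat list \<Rightarrow> nat list \<Rightarrow> bool" where
  "contains_pattern w p \<longleftrightarrow> (\<exists>u. subseq u w \<and> order_iso u p)"

definition avoids :: "nat list \<Rightarrow> nat list \<Rightarrow> bool" where
  "avoids w p \<longleftrightarrow> \<not> contains_pattern w p"

definition multiperm :: "nat \<Rightarrow> nat \<Rightarrow> nat list \<Rightarrow> bool" where
  "multiperm n m w \<longleftrightarrow> length w = n * m \<and> set w \<subseteq> {1..n} \<and>
     (\<forall>i\<in>{1..n}. count_list w i = m)"

definition s_count :: "nat \<Rightarrow> nat \<Rightarrow> nat list set \<Rightarrow> nat" where
  "s_count n m Pi = card {w. multiperm n m w \<and> (\<forall>p\<in>Pi. avoids w p)}"

end

theory Submission
  imports Defs
begin


lemma len3: "length u = 3 \<Longrightarrow> \<exists>x y z. u = [x,y,z]"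
  by (cases u; cases "tl u"; cases "tl (tl u)"; auto)

lemma all3: "(\<forall>i<Suc (Suc (Suc 0)). P i) \<longleftrightarrow> P 0 \<and> P (Suc 0) \<and> P (Suc (Suc 0))"
  by (auto simp add: numeral_3_eq_3 less_Suc_eq)

lemma oi211: "order_iso [x,y,z] [2,1,1] \<longleftrightarrow> y < x \<and> z = y"
  unfolding order_iso_def by (simp add: all3) linarith

lemma oi213: "order_iso [x,y,z] [2,1,3] \<longleftrightarrow> y < x \<and> x < z"
  unfolding order_iso_def by (simp add: all3) linarith

definition bad :: "nat list \<Rightarrow> bool" where
  "bad w \<longleftrightarrow> (\<exists>a b c. subseq [a,b,c] w \<and> b<a \<and> (c = b \<or> a < c))"


lemma c211: "contains_pattern w [2,1,1] \<longleftrightarrow> (\<exists>a b. subseq [a,b,b] w \<and> b < a)"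
proof
  assume "contains_pattern w [2,1,1]"
  then obtain u where a: "subseq u w" "order_iso u [2,1,1]" unfolding contains_pattern_def by blast
  then obtain x y z where u: "u=[x,y,z]" using len3[of u] unfolding order_iso_def by auto
  with a(2) have "y < x" "z = y" using oi211 by blast+
  then show "\<exists>a b. subseq [a,b,b] w \<and> b < a" using a(1) u by blast
next
  assume "\<exists>a b. subseq [a,b,b] w \<and> b < a"
  then obtain a b where "subseq [a,b,b] w" "b < a" by blast
  then show "contains_pattern w [2,1,1]" unfolding contains_pattern_def using oi211[of a b b] by blast
qed

lemma c213: "contains_pattern w [2,1,3] \<longleftrightarrow> (\<exists>a b c. subseq [a,b,c] w \<and> b < a \<and> a < c)"
proof
  assume "contains_pattern w [2,1,3]"
  then obtain u where a: "subseq u w" "order_iso u [2,1,3]" unfolding contains_pattern_def by blast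
  then obtain x y z where u: "u=[x,y,z]" using len3[of u] unfolding order_iso_def by auto
  with a(2) have "y < x" "x < z" using oi213 by blast+
  then show "\<exists>a b c. subseq [a,b,c] w \<and> b < a \<and> a < c" using a(1) u by blast
next
  assume "\<exists>a b c. subseq [a,b,c] w \<and> b < a \<and> a < c"
  then obtain a b c where "subseq [a,b,c] w" "b < a" "a < c" by blast
  then show "contains_pattern w [2,1,3]" unfolding contains_pattern_def using oi213[of a b c] by blast
qed

lemma avoids_iff: "(\<forall>p\<in>{[2,1,1],[2,1,3]}. avoids w p) \<longleftrightarrow> \<not> bad w"
proof -
  have "(\<forall>p\<in>{[2,1,1],[2,1,3]}. avoids w p) \<longleftrightarrow> \<not> contains_pattern w [2,1,1] \<and> \<not> contains_pattern w [2,1,3]"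
    unfolding avoids_def by simp
  also have "\<dots> \<longleftrightarrow> \<not> bad w" unfolding c211 c213 bad_def by blast
  finally show ?thesis .
qed



definition G :: "nat \<Rightarrow> nat \<Rightarrow> nat list set" where
  "G m n = {w. multiperm n m w \<and> \<not> bad w}"

definition H :: "nat \<Rightarrow> nat list \<Rightarrow> nat list \<Rightarrow> nat list" where
  "H m y z = replicate (m-1) 1 @ map Suc y @ 1 # map Suc z"

lemma s_count_G: "s_count n m {[2,1,1],[2,1,3]} = card (G m n)"
  unfolding s_count_def G_def by (simp only: avoids_iff)

lemma G_fin: "finite (G m n)"
proof -
  have "G m n \<subseteq> {xs. set xs \<subseteq> {1..n} \<and> length xs = n*m}"
    unfolding G_def multiperm_def by auto
  moreover have "finite {xs. set xs \<subseteq> {1..n} \<and> length xs = n*m}"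
    by (rule finite_lists_length_eq) simp
  ultimately show ?thesis by (rule finite_subset)
qed

lemma G_D: assumes "w \<in> G m n"
  shows "length w = n*m" "set w \<subseteq> {1..n}" "\<And>i. i\<in>{1..n} \<Longrightarrow> count_list w i = m" "\<not> bad w"
  using assms unfolding G_def multiperm_def by auto

lemma G_I: assumes "length w = n*m" "set w \<subseteq> {1..n}" "\<And>i. i\<in>{1..n} \<Longrightarrow> count_list w i = m" "\<not> bad w"
  shows "w \<in> G m n"
  using assms unfolding G_def multiperm_def by auto

lemma bad_mono: "subseq u w \<Longrightarrow> bad u \<Longrightarrow> bad w"
  unfolding bad_def using subseq_order.order_trans by blast

lemma bad_Suc: "bad (map Suc u) \<longleftrightarrow> bad u"
proof
  assume "bad u"
  then obtain a b c where "subseq [a,b,c] u" "b<a" "c = b \<or> a < c" unfolding bad_def by blast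
  then have "subseq [Suc a, Suc b, Suc c] (map Suc u)" "Suc b < Suc a" "Suc c = Suc b \<or> Suc a < Suc c"
    using subseq_map[of "[a,b,c]" u Suc] by auto
  then show "bad (map Suc u)" unfolding bad_def by blast
next
  assume "bad (map Suc u)"
  then obtain a b c where s: "subseq [a,b,c] (map Suc u)" "b<a" "c = b \<or> a < c" unfolding bad_def by blast
  have pos: "x > 0" if xin: "x \<in> set [a,b,c]" for x
  proof -
    obtain y where "y \<in> set (map Suc u)" "x = y" using list_emb_set[OF s(1) xin] by blast
    then show ?thesis by auto
  qed
  have "a > 0" "b > 0" "c > 0" using pos by auto
  have "subseq (map (\<lambda>x. x - 1) [a,b,c]) (map (\<lambda>x. x - 1) (map Suc u))"
    by (rule subseq_map[OF s(1)])
  then have "subseq [a-1,b-1,c-1] u" by (simp add: map_idI)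
  moreover have "b - 1 < a - 1" "c - 1 = b - 1 \<or> a - 1 < c - 1" using s(2,3) \<open>a>0\<close> \<open>b>0\<close> \<open>c>0\<close> by linarith+
  ultimately show "bad u" unfolding bad_def by blast
qed

lemma count_rep: "count_list (replicate k x) y = (if x = y then k else 0)"
  by (induct k) auto

lemma cnt2: assumes "count_list r x \<ge> 2" shows "subseq [x,x] r"
proof -
  have f: "filter ((=) x) r = replicate (count_list r x) x"
    unfolding count_list_eq_length_filter by (rule replicate_length_same[symmetric]) simp
  obtain k where "count_list r x = Suc (Suc k)" using assms by (metis add_2_eq_Suc le_Suc_ex)
  then have "subseq [x,x] (filter ((=) x) r)" unfolding f by (simp add: subseq_rev_drop_many)
  then show ?thesis using subseq_filter_left subseq_order.order_trans by blast
qed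

lemma app_unique: "x \<notin> set xs \<Longrightarrow> x \<notin> set xs' \<Longrightarrow> xs @ x # ys = xs' @ x # ys' \<Longrightarrow> xs = xs' \<and> ys = ys'"
proof (induct xs arbitrary: xs')
  case Nil
  then show ?case by (cases xs') auto
next
  case (Cons a xs)
  note IH = Cons.hyps and P = Cons.prems
  show ?case
  proof (cases xs')
    case Nil then show ?thesis using P by auto
  next
    case (Cons b xs'')
    with P have "a = b" "xs @ x # ys = xs'' @ x # ys'" "x \<notin> set xs" "x \<notin> set xs''"
      by simp_all
    with IH Cons show ?thesis by blast
  qed
qed

lemma H_inj: assumes "0 \<notin> set y" "0 \<notin> set y'" "H m y z = H m y' z'" shows "y = y' \<and> z = z'"
proof -
  have e: "map Suc y @ 1 # map Suc z = map Suc y' @ 1 # map Suc z'" using assms(3) unfolding H_def by simp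
  have n: "1 \<notin> set (map Suc y)" "1 \<notin> set (map Suc y')" using assms(1,2) by auto
  from app_unique[OF n e] have "map Suc y = map Suc y'" "map Suc z = map Suc z'" by simp_all
  then show ?thesis by simp
qed



lemma pre_ones:
  assumes m2: "m \<ge> 2" and c1: "count_list w 1 = m" and nb: "\<not> bad w" and sw: "\<forall>x\<in>set w. x \<ge> (1::nat)"
  shows "\<exists>v. w = replicate (m-1) 1 @ v \<and> count_list v 1 = 1"
proof -
  define T where "T = takeWhile ((=) (1::nat)) w"
  define D' where "D' = dropWhile ((=) (1::nat)) w"
  have wTD: "w = T @ D'" unfolding T_def D'_def by simp
  have T: "T = replicate (length T) 1" unfolding T_def
    by (rule replicate_length_same[symmetric]) (auto dest: set_takeWhileD)
  have cw: "count_list w 1 = length T + count_list D' 1"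
    using wTD T count_rep[of "length T" 1 1] by (metis count_list_append)
  show ?thesis
  proof (cases "length T \<ge> m - 1")
    case True
    define v where "v = replicate (length T - (m-1)) 1 @ D'"
    have r: "replicate (length T) (1::nat) = replicate (m-1) 1 @ replicate (length T - (m-1)) 1"
      using True by (simp add: replicate_add[symmetric])
    have "w = replicate (m-1) 1 @ v" unfolding v_def using wTD T r by (metis append.assoc)
    moreover have "count_list v 1 = 1" unfolding v_def using cw c1 m2 True by (simp add: count_rep)
    ultimately show ?thesis by blast
  next
    case False
    have cD: "count_list D' 1 \<ge> 2" using cw c1 False m2 by linarith
    then have "D' \<noteq> []" by auto
    then obtain b r where Dbr: "D' = b # r" by (cases D') auto
    have b1: "b \<noteq> 1" using hd_dropWhile[of "(=) (1::nat)" w] \<open>D' \<noteq> []\<close> Dbr unfolding D'_def by simp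
    have "b \<in> set w" using wTD Dbr by simp
    then have bg: "b > 1" using sw b1 by fastforce
    have "count_list r 1 \<ge> 2" using cD Dbr b1 by simp
    then have "subseq [1,1] r" by (rule cnt2)
    then have "subseq [b,1,1] (b # r)" by simp
    then have "subseq [b,1,1] w" using wTD Dbr subseq_drop_many by metis
    then have "bad w" unfolding bad_def using bg by blast
    with nb show ?thesis by simp
  qed
qed

lemma nec:
  assumes m2: "m \<ge> 2" and n1: "n \<ge> 1" and w: "w \<in> G m n"
  shows "\<exists>y z. w = H m y z \<and> y@z \<in> G m (n-1) \<and> (\<forall>b\<in>set y. \<forall>c\<in>set z. c \<le> b)"
proof -
  note D = G_D[OF w]
  have c1: "count_list w 1 = m" using D(3) n1 by auto
  have nb: "\<not> bad w" by (rule D(4))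
  have sw: "set w \<subseteq> {1..n}" by (rule D(2))
  have "\<exists>v. w = replicate (m-1) 1 @ v \<and> count_list v 1 = 1"
    by (rule pre_ones[OF m2 c1 nb]) (use sw in auto)
  then obtain v where wv: "w = replicate (m-1) 1 @ v" and cv: "count_list v 1 = 1" by blast
  from count_list_Suc_split_first[of v 1 0] cv obtain y0 z0 where
    v: "v = y0 @ 1 # z0" "1 \<notin> set y0" "count_list z0 1 = 0" by auto
  have nz: "1 \<notin> set z0" using v(3) count_list_0_iff by metis
  have sy: "set y0 \<subseteq> set w" "set z0 \<subseteq> set w" using wv v(1) by auto
  have gy: "x \<ge> 2 \<and> x \<le> n" if xin: "x \<in> set y0" for x
  proof -
    have "x \<in> {1..n}" "x \<noteq> 1" using xin sy sw v(2) by blast+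
    then show ?thesis by auto
  qed
  have gz: "x \<ge> 2 \<and> x \<le> n" if xin: "x \<in> set z0" for x
  proof -
    have "x \<in> {1..n}" "x \<noteq> 1" using xin sy sw nz by blast+
    then show ?thesis by auto
  qed
  define y where "y = map (\<lambda>x. x-1) y0"
  define z where "z = map (\<lambda>x. x-1) z0"
  have y0: "map Suc y = y0" unfolding y_def map_map
    by (rule map_idI) (use gy in fastforce)
  have z0: "map Suc z = z0" unfolding z_def map_map
    by (rule map_idI) (use gz in fastforce)
  have wH: "w = H m y z" unfolding H_def using wv v(1) y0 z0 by simp
  have sub0: "subseq (y0 @ 1 # z0) w" using wv v(1) subseq_drop_many subseq_order.order_refl by metis
  have valid: "\<forall>b\<in>set y. \<forall>c\<in>set z. c \<le> b"
  proof (intro ballI)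
    fix b c assume bc: "b \<in> set y" "c \<in> set z"
    show "c \<le> b"
    proof (rule ccontr)
      assume "\<not> c \<le> b"
      have "Suc b \<in> set y0" using bc(1) y0 by auto
      moreover have "Suc c \<in> set z0" using bc(2) z0 by auto
      ultimately have "subseq [Suc b] y0" "subseq [1, Suc c] (1 # z0)"
        by (simp_all add: subseq_singleton_left)
      then have "subseq ([Suc b] @ [1, Suc c]) (y0 @ 1 # z0)" by (rule list_emb_append_mono)
      then have s: "subseq [Suc b, 1, Suc c] w" using sub0 subseq_order.order_trans by auto
      have "Suc b \<ge> 2" using gy \<open>Suc b \<in> set y0\<close> by blast
      then have "bad w" unfolding bad_def using s \<open>\<not> c \<le> b\<close>
        by (intro exI[of _ "Suc b"] exI[of _ 1] exI[of _ "Suc c"]) simp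
      with nb show False by simp
    qed
  qed
  have "y @ z \<in> G m (n-1)"
  proof (rule G_I)
    have "length w = m - 1 + length y + 1 + length z" using wH unfolding H_def by simp
    moreover have "(n-1)*m = n*m - m" by (simp add: diff_mult_distrib)
    moreover have "n * m \<ge> m" using n1 by simp
    ultimately show "length (y @ z) = (n-1)*m" using D(1) m2 by simp
  next
    show "set (y @ z) \<subseteq> {1..n-1}"
    proof
      fix x assume "x \<in> set (y @ z)"
      then have "Suc x \<in> set (y0 @ z0)" using y0 z0 by force
      then have "Suc x \<ge> 2 \<and> Suc x \<le> n" using gy gz by (metis Un_iff set_append)
      then show "x \<in> {1..n-1}" by auto
    qed
  next
    fix i assume i: "i \<in> {1..n-1}"
    have "count_list (y @ z) i = count_list (map Suc (y @ z)) (Suc i)"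
      by (simp add: count_list_map_conv)
    also have "\<dots> = count_list (y0 @ z0) (Suc i)" using y0 z0 by simp
    also have "\<dots> = count_list w (Suc i)" using wv v(1) i by (simp add: count_rep)
    also have "\<dots> = m" using D(3) i by auto
    finally show "count_list (y @ z) i = m" .
  next
    show "\<not> bad (y @ z)"
    proof
      assume "bad (y @ z)"
      then have "bad (y0 @ z0)" using bad_Suc[of "y@z"] y0 z0 by simp
      moreover have "subseq (y0 @ z0) (y0 @ 1 # z0)"
        by (rule list_emb_append_mono) (simp_all add: subseq_drop_many[of z0 z0 "[1]", simplified])
      ultimately have "bad w" using sub0 bad_mono subseq_order.order_trans by blast
      with nb show False by simp
    qed
  qed
  then show ?thesis using wH valid by blast
qed



lemma split3: "[a,b,c] = xs1 @ xs2 \<Longrightarrow> xs1 = [] \<or> (xs1 = [a] \<and> xs2 = [b,c]) \<or> b \<in> set xs1"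
  by (cases xs1) (auto simp: Cons_eq_append_conv)

lemma skip: "x \<notin> set P \<Longrightarrow> subseq (x#xs) (P@Q) \<Longrightarrow> subseq (x#xs) Q"
proof (induct P)
  case Nil then show ?case by simp
next
  case (Cons p P)
  then have "x \<noteq> p" "x \<notin> set P" by auto
  with Cons.prems(2) have "subseq (x#xs) (P@Q)" by simp
  with Cons.hyps \<open>x \<notin> set P\<close> show ?case by blast
qed

lemma subseq_set: "subseq xs ys \<Longrightarrow> x \<in> set xs \<Longrightarrow> x \<in> set ys"
  by (erule list_emb_set) auto

lemma suf:
  assumes m2: "m \<ge> 2" and n1: "n \<ge> 1" and u: "y@z \<in> G m (n-1)"
    and valid: "\<forall>b\<in>set y. \<forall>c\<in>set z. c \<le> b"
  shows "H m y z \<in> G m n"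
proof -
  note D = G_D[OF u]
  have sy: "1 \<le> x \<and> x \<le> n-1" if "x \<in> set y \<or> x \<in> set z" for x
    using D(2) that by auto
  have y0: "0 \<notin> set y" "0 \<notin> set z" using sy by fastforce+
  have n1y: "1 \<notin> set (map Suc y)" "1 \<notin> set (map Suc z)" using y0 by auto
  have sw: "set (H m y z) \<subseteq> {1..n}"
  proof
    fix x assume "x \<in> set (H m y z)"
    then have "x = 1 \<or> (\<exists>x'. x = Suc x' \<and> (x' \<in> set y \<or> x' \<in> set z))" unfolding H_def
      by (auto split: if_splits)
    moreover have bnd: "Suc x' \<le> n" if xy: "x' \<in> set y \<or> x' \<in> set z" for x'
      using sy[OF xy] n1 by linarith
    ultimately show "x \<in> {1..n}" using n1 by auto
  qed
  show ?thesis
  proof (rule G_I)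
    have "n * m = m + (n-1)*m" using n1 by (cases n) auto
    then show "length (H m y z) = n * m" using D(1) m2 unfolding H_def by simp
  next
    show "set (H m y z) \<subseteq> {1..n}" by (rule sw)
  next
    fix i assume i: "i \<in> {1..n}"
    show "count_list (H m y z) i = m"
    proof (cases "i = 1")
      case True
      then show ?thesis unfolding H_def using n1y m2 by (simp add: count_rep)
    next
      case False
      then obtain j where j: "i = Suc j" "j \<in> {1..n-1}" using i by (cases i) auto
      have "count_list (H m y z) i = count_list (map Suc y) (Suc j) + count_list (map Suc z) (Suc j)"
        unfolding H_def using j by (simp add: count_rep)
      also have "\<dots> = count_list (y @ z) j" by (simp add: count_list_map_conv)
      also have "\<dots> = m" using D(3) j by blast
      finally show ?thesis .
    qed
  next
    show "\<not> bad (H m y z)"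
    proof
      assume "bad (H m y z)"
      then obtain a b c where s: "subseq [a,b,c] (H m y z)" "b<a" "c = b \<or> a < c"
        unfolding bad_def by blast
      have "b \<in> set (H m y z)" using subseq_set[OF s(1)] by simp
      then have b1: "b \<ge> 1" using sw by auto
      show False
      proof (cases "b = 1")
        case False
        then have ne: "a \<noteq> 1" "b \<noteq> 1" "c \<noteq> 1" using s(2,3) b1 by auto
        have "subseq (filter (\<lambda>x. x \<noteq> 1) [a,b,c]) (filter (\<lambda>x. x \<noteq> 1) (H m y z))"
          by (rule subseq_filter[OF s(1)])
        moreover have "filter (\<lambda>x. x \<noteq> 1) [a,b,c] = [a,b,c]" using ne by simp
        moreover have "filter (\<lambda>x. x \<noteq> (1::nat)) (H m y z) = map Suc (y @ z)"
        proof -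
          have "filter (\<lambda>x. x \<noteq> (1::nat)) (replicate (m-1) 1) = []" by (induct m) auto
          moreover have "filter (\<lambda>x. x \<noteq> (1::nat)) (map Suc y) = map Suc y"
            using n1y(1) by (intro filter_True) blast
          moreover have "filter (\<lambda>x. x \<noteq> (1::nat)) (map Suc z) = map Suc z"
            using n1y(2) by (intro filter_True) blast
          ultimately show ?thesis unfolding H_def by simp
        qed
        ultimately have "subseq [a,b,c] (map Suc (y @ z))" by simp
        then have "bad (map Suc (y @ z))" unfolding bad_def using s(2,3) by blast
        then show False using bad_Suc D(4) by blast
      next
        case True
        have a1: "a \<notin> set (replicate (m-1) (1::nat))" using s(2) True by auto
        have "subseq [a,b,c] (replicate (m-1) 1 @ (map Suc y @ 1 # map Suc z))"
          using s(1) unfolding H_def .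
        then have "subseq [a,b,c] (map Suc y @ 1 # map Suc z)" by (rule skip[OF a1])
        then obtain xs1 xs2 where sp: "[a,b,c] = xs1 @ xs2" "subseq xs1 (map Suc y)" "subseq xs2 (1 # map Suc z)"
          by (rule subseq_appendE)
        have "xs1 = [] \<or> (xs1 = [a] \<and> xs2 = [b,c]) \<or> b \<in> set xs1" by (rule split3[OF sp(1)])
        then show False
        proof (elim disjE)
          assume "xs1 = []"
          then have "xs2 = [a,b,c]" using sp(1) by simp
          then have "subseq [a,b,c] (1 # map Suc z)" using sp(3) by simp
          moreover have "a \<noteq> 1" using s(2) True by simp
          ultimately have "subseq [a,b,c] (map Suc z)" by simp
          then have "b \<in> set (map Suc z)" by (rule subseq_set) simp
          then show False using True n1y by simp
        next
          assume "b \<in> set xs1"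
          then have "b \<in> set (map Suc y)" by (rule subseq_set[OF sp(2)])
          then show False using True n1y by simp
        next
          assume x1: "xs1 = [a] \<and> xs2 = [b,c]"
          then have "subseq [a] (map Suc y)" using sp(2) by simp
          then have "a \<in> set (map Suc y)" by (rule subseq_set) simp
          then obtain a' where a': "a = Suc a'" "a' \<in> set y" by auto
          have "subseq [1,c] (1 # map Suc z)" using sp(3) x1 True by simp
          then have "subseq [c] (map Suc z)" by simp
          then have "c \<in> set (map Suc z)" by (rule subseq_set) simp
          then obtain c' where c': "c = Suc c'" "c' \<in> set z" by auto
          have "c' \<noteq> 0" using c'(2) y0(2) by metis
          then have "c \<noteq> b" using c'(1) True by simp
          then have "a < c" using s(3) by simp
          moreover have "c' \<le> a'" using valid a'(2) c'(2) by blast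
          ultimately show False using a'(1) c'(1) by simp
        qed
      qed
    qed
  qed
qed



lemma G_pos: "w \<in> G m n \<Longrightarrow> 0 \<notin> set w"
  using G_D(2) by fastforce

lemma G_len_pos: "w \<in> G m n \<Longrightarrow> n \<ge> 1 \<Longrightarrow> m \<ge> 2 \<Longrightarrow> w \<noteq> []"
  using G_D(1)[of w m n] by auto

lemma G0: "G m 0 = {[]}"
proof
  show "G m 0 \<subseteq> {[]}" using G_D(1) by fastforce
  have "\<not> bad []" unfolding bad_def by simp
  then show "{[]} \<subseteq> G m 0" by (auto intro: G_I)
qed

lemma H_nil: "m \<ge> 1 \<Longrightarrow> H m [] [] = replicate m 1"
  unfolding H_def by (cases m) (simp_all add: replicate_append_same)

lemma G1: assumes m2: "m \<ge> 2" shows "G m 1 = {replicate m 1}"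
proof
  show "G m 1 \<subseteq> {replicate m 1}"
  proof
    fix w assume w: "w \<in> G m 1"
    from nec[OF m2 _ w] obtain y z where "w = H m y z" "y @ z \<in> G m 0" by auto
    then have "w = H m [] []" using G0 by simp
    then show "w \<in> {replicate m 1}" using H_nil m2 by simp
  qed
next
  have "H m [] [] \<in> G m 1" by (rule suf[OF m2]) (simp_all add: G0)
  then show "{replicate m 1} \<subseteq> G m 1" using H_nil m2 by simp
qed

lemma G2: assumes m2: "m \<ge> 2"
  shows "G m 2 = (\<lambda>k. H m (replicate k 1) (replicate (m-k) 1)) ` {0..m}"
proof
  show "G m 2 \<subseteq> (\<lambda>k. H m (replicate k 1) (replicate (m-k) 1)) ` {0..m}"
  proof
    fix w assume w: "w \<in> G m 2"
    from nec[OF m2 _ w] obtain y z where wh: "w = H m y z" and yz: "y @ z \<in> G m 1" by auto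
    then have e: "y @ z = replicate m 1" using G1[OF m2] by simp
    then have l: "length y + length z = m" by (metis length_append length_replicate)
    have "\<forall>x\<in>set y. x = 1" using e by (metis Un_iff in_set_replicate set_append)
    then have y: "y = replicate (length y) 1" by (simp add: replicate_length_same)
    have "\<forall>x\<in>set z. x = 1" using e by (metis Un_iff in_set_replicate set_append)
    then have z: "z = replicate (m - length y) 1" using l by (metis add_diff_cancel_left' replicate_length_same)
    have "w = H m (replicate (length y) 1) (replicate (m - length y) 1)" using wh y z by metis
    moreover have "length y \<in> {0..m}" using l by simp
    ultimately show "w \<in> (\<lambda>k. H m (replicate k 1) (replicate (m-k) 1)) ` {0..m}" by blast
  qed
next
  show "(\<lambda>k. H m (replicate k 1) (replicate (m-k) 1)) ` {0..m} \<subseteq> G m 2"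
  proof
    fix w assume "w \<in> (\<lambda>k. H m (replicate k 1) (replicate (m-k) 1)) ` {0..m}"
    then obtain k where k: "k \<le> m" "w = H m (replicate k 1) (replicate (m-k) 1)" by auto
    have "replicate k (1::nat) @ replicate (m-k) 1 = replicate m 1"
      using k(1) by (simp add: replicate_add[symmetric])
    then have g: "replicate k 1 @ replicate (m-k) 1 \<in> G m (2-1)" using G1[OF m2] by simp
    have "H m (replicate k 1) (replicate (m-k) 1) \<in> G m 2" by (rule suf[OF m2 _ g]) auto
    then show "w \<in> G m 2" using k by simp
  qed
qed

lemma card_G2: assumes m2: "m \<ge> 2" shows "card (G m 2) = m + 1"
proof -
  have "inj_on (\<lambda>k. H m (replicate k 1) (replicate (m-k) 1)) {0..m}"
  proof
    fix k k' assume e: "H m (replicate k 1) (replicate (m-k) 1) = H m (replicate k' 1) (replicate (m-k') 1)"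
    have "0 \<notin> set (replicate k (1::nat))" "0 \<notin> set (replicate k' (1::nat))" by simp_all
    from H_inj[OF this e] have "replicate k (1::nat) = replicate k' 1" by simp
    then show "k = k'" by (metis length_replicate)
  qed
  then show ?thesis unfolding G2[OF m2] by (simp add: card_image)
qed



lemma split_case:
  assumes m2: "m \<ge> 2" and n3: "n \<ge> 3" and u: "y @ z \<in> G m (n-1)"
    and valid: "\<forall>b\<in>set y. \<forall>c\<in>set z. c \<le> b" and yne: "y \<noteq> []" and zne: "z \<noteq> []"
  shows "\<exists>v\<in>G m (n-2). y = replicate (m-1) 1 @ map Suc v \<and> z = [1]"
proof -
  have n1': "n - 1 \<ge> 1" using n3 by simp
  from nec[OF m2 n1' u] obtain y2 z2 where e: "y @ z = H m y2 z2" and g2: "y2 @ z2 \<in> G m (n-1-1)"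
    by blast
  have g2': "y2 @ z2 \<in> G m (n-2)" using g2 by (metis diff_diff_left one_add_one)
  have pos: "0 \<notin> set (y2 @ z2)" by (rule G_pos[OF g2'])
  have pu: "0 \<notin> set (y @ z)" by (rule G_pos[OF u])
  obtain k where k: "m - 1 = Suc k" using m2 by (cases "m - 1") auto
  have "hd (y @ z) = 1" unfolding e H_def k by simp
  then have "hd y = 1" using yne by simp
  then have "1 \<in> set y" using yne by (metis list.set_sel(1))
  have z1: "\<forall>c\<in>set z. c = 1"
  proof
    fix c assume c: "c \<in> set z"
    then have "c \<le> 1" using valid \<open>1 \<in> set y\<close> by blast
    moreover have "c \<noteq> 0" using pu c by (metis Un_iff set_append)
    ultimately show "c = 1" by simp
  qed
  have lz: "last z = 1" using z1 zne by simp
  have "z2 = []"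
  proof (rule ccontr)
    assume "z2 \<noteq> []"
    then have "last (H m y2 z2) = Suc (last z2)" unfolding H_def by (simp add: last_map)
    moreover have "last z2 \<in> set z2" using \<open>z2 \<noteq> []\<close> by simp
    then have "last z2 \<noteq> 0" using pos by (metis Un_iff set_append)
    moreover have "last (y @ z) = 1" using lz zne by simp
    ultimately show False using e by simp
  qed
  define A where "A = replicate (m-1) 1 @ map Suc y2"
  have eA: "y @ z = A @ [1]" using e \<open>z2 = []\<close> unfolding H_def A_def by simp
  have "length (y2 @ z2) = (n-2)*m" by (rule G_D(1)[OF g2'])
  then have y2ne: "y2 \<noteq> []" using n3 m2 \<open>z2 = []\<close> by auto
  have lA: "last A \<noteq> 1"
  proof -
    have "last A = Suc (last y2)" unfolding A_def using y2ne by (simp add: last_map)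
    moreover have "last y2 \<noteq> 0" using pos y2ne by (metis Un_iff last_in_set set_append)
    ultimately show ?thesis by simp
  qed
  define z' where "z' = butlast z"
  have zz: "z = z' @ [1]" unfolding z'_def using zne lz by (metis append_butlast_last_id)
  then have "y @ z' = A" using eA by simp
  have "z' = []"
  proof (rule ccontr)
    assume "z' \<noteq> []"
    then have "last z' = last A" using \<open>y @ z' = A\<close> by (metis last_appendR)
    moreover have "last z' \<in> set z" using zz \<open>z' \<noteq> []\<close> by simp
    ultimately show False using z1 lA by simp
  qed
  then have "y = A" "z = [1]" using \<open>y @ z' = A\<close> zz by simp_all
  moreover have "y2 \<in> G m (n-2)" using g2' \<open>z2 = []\<close> by simp
  ultimately show ?thesis unfolding A_def by blast
qed

lemma G_rec:
  assumes m2: "m \<ge> 2" and n3: "n \<ge> 3"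
  shows "G m n = (H m [] ` G m (n-1) \<union> (\<lambda>u. H m u []) ` G m (n-1))
                 \<union> (\<lambda>v. H m (replicate (m-1) 1 @ map Suc v) [1]) ` G m (n-2)"
    (is "_ = (?A \<union> ?B) \<union> ?C")
proof
  show "G m n \<subseteq> (?A \<union> ?B) \<union> ?C"
  proof
    fix w assume w: "w \<in> G m n"
    from nec[OF m2 _ w] n3 obtain y z where wh: "w = H m y z" and u: "y @ z \<in> G m (n-1)"
      and valid: "\<forall>b\<in>set y. \<forall>c\<in>set z. c \<le> b" by auto
    show "w \<in> (?A \<union> ?B) \<union> ?C"
    proof (cases "y = []")
      case True
      then have "w \<in> ?A" using wh u by simp
      then show ?thesis by blast
    next
      case yne: False
      show ?thesis
      proof (cases "z = []")
        case True
        then have "w \<in> ?B" using wh u by simp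
        then show ?thesis by blast
      next
        case False
        from split_case[OF m2 n3 u valid yne False] obtain v where
          "v \<in> G m (n-2)" "y = replicate (m-1) 1 @ map Suc v" "z = [1]" by blast
        then have "w \<in> ?C" using wh by blast
        then show ?thesis by blast
      qed
    qed
  qed
next
  show "(?A \<union> ?B) \<union> ?C \<subseteq> G m n"
  proof (intro Un_least)
    show "?A \<subseteq> G m n"
    proof
      fix w assume "w \<in> ?A"
      then obtain u where u: "u \<in> G m (n-1)" "w = H m [] u" by blast
      have "H m [] u \<in> G m n" by (rule suf[OF m2]) (use u n3 in simp_all)
      then show "w \<in> G m n" using u by simp
    qed
    show "?B \<subseteq> G m n"
    proof
      fix w assume "w \<in> ?B"
      then obtain u where u: "u \<in> G m (n-1)" "w = H m u []" by blast
      have "H m u [] \<in> G m n" by (rule suf[OF m2]) (use u n3 in simp_all)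
      then show "w \<in> G m n" using u by simp
    qed
    show "?C \<subseteq> G m n"
    proof
      fix w assume "w \<in> ?C"
      then obtain v where v: "v \<in> G m (n-2)" "w = H m (replicate (m-1) 1 @ map Suc v) [1]" by blast
      have v': "v @ [] \<in> G m (n - 1 - 1)" using v(1) by (metis append_Nil2 diff_diff_left one_add_one)
      have "H m v [] \<in> G m (n-1)" by (rule suf[OF m2 _ v']) (use n3 in simp_all)
      moreover have "H m v [] = (replicate (m-1) 1 @ map Suc v) @ [1]" unfolding H_def by simp
      ultimately have g: "(replicate (m-1) 1 @ map Suc v) @ [1] \<in> G m (n-1)" by simp
      have vl: "\<forall>b\<in>set (replicate (m-1) 1 @ map Suc v). \<forall>c\<in>set [1]. c \<le> b" by auto
      have n1: "n \<ge> 1" using n3 by simp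
      have "H m (replicate (m-1) 1 @ map Suc v) [1] \<in> G m n" by (rule suf[OF m2 n1 g vl])
      then show "w \<in> G m n" using v by simp
    qed
  qed
qed

lemma card_rec:
  assumes m2: "m \<ge> 2" and n3: "n \<ge> 3"
  shows "card (G m n) = 2 * card (G m (n-1)) + card (G m (n-2))"
proof -
  let ?A = "H m [] ` G m (n-1)" and ?B = "(\<lambda>u. H m u []) ` G m (n-1)"
    and ?C = "(\<lambda>v. H m (replicate (m-1) 1 @ map Suc v) [1]) ` G m (n-2)"
  have iA: "inj_on (H m []) (G m (n-1))"
  proof
    fix u u' assume "H m [] u = H m [] u'"
    from H_inj[OF _ _ this] show "u = u'" by simp
  qed
  have iB: "inj_on (\<lambda>u. H m u []) (G m (n-1))"
  proof
    fix u u' assume "u \<in> G m (n-1)" "u' \<in> G m (n-1)" "H m u [] = H m u' []"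
    from H_inj[OF G_pos[OF this(1)] G_pos[OF this(2)] this(3)] show "u = u'" by simp
  qed
  have iC: "inj_on (\<lambda>v. H m (replicate (m-1) 1 @ map Suc v) [1]) (G m (n-2))"
  proof
    fix u u' assume "H m (replicate (m-1) 1 @ map Suc u) [1] = H m (replicate (m-1) 1 @ map Suc u') [1]"
    from H_inj[OF _ _ this] show "u = u'" by simp
  qed
  have dAB: "?A \<inter> ?B = {}"
  proof (rule ccontr)
    assume "?A \<inter> ?B \<noteq> {}"
    then obtain u u' where uu: "u' \<in> G m (n-1)" "H m [] u = H m u' []" by blast
    from H_inj[OF _ G_pos[OF uu(1)] uu(2)] have "u' = []" by simp
    moreover have "n - 1 \<ge> 1" using n3 by simp
    ultimately show False using G_len_pos[OF uu(1) _ m2] by blast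
  qed
  have dC: "(?A \<union> ?B) \<inter> ?C = {}"
  proof (rule ccontr)
    assume "(?A \<union> ?B) \<inter> ?C \<noteq> {}"
    then obtain w where "w \<in> ?A \<or> w \<in> ?B" "w \<in> ?C" by blast
    then obtain v where v: "w = H m (replicate (m-1) 1 @ map Suc v) [1]" by blast
    have p: "0 \<notin> set (replicate (m-1) (1::nat) @ map Suc v)" by simp
    show False
    proof (cases "w \<in> ?A")
      case True
      then obtain u where "w = H m [] u" by blast
      with v have "H m [] u = H m (replicate (m-1) 1 @ map Suc v) [1]" by simp
      from H_inj[OF _ p this] have "[] = replicate (m-1) (1::nat) @ map Suc v" by simp
      with m2 show False by simp
    next
      case False
      with \<open>w \<in> ?A \<or> w \<in> ?B\<close> obtain u where u: "u \<in> G m (n-1)" "w = H m u []" by blast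
      with v have "H m u [] = H m (replicate (m-1) 1 @ map Suc v) [1]" by simp
      from H_inj[OF G_pos[OF u(1)] p this] show False by simp
    qed
  qed
  have f: "finite ?A" "finite ?B" "finite ?C" using G_fin by simp_all
  have "card (G m n) = card (?A \<union> ?B) + card ?C"
    unfolding G_rec[OF m2 n3] using f dC by (simp add: card_Un_disjoint)
  also have "\<dots> = card ?A + card ?B + card ?C" using f dAB by (simp add: card_Un_disjoint)
  also have "\<dots> = 2 * card (G m (n-1)) + card (G m (n-2))"
    using iA iB iC by (simp add: card_image)
  finally show ?thesis .
qed

theorem theorem5:
  fixes m :: nat
  assumes "m \<ge> 2"
  shows "s_count 1 m {[2,1,1],[2,1,3]} = 1
    \<and> s_count 2 m {[2,1,1],[2,1,3]} = m + 1
    \<and> (\<forall>n\<ge>3. s_count n m {[2,1,1],[2,1,3]} =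
           2 * s_count (n - 1) m {[2,1,1],[2,1,3]} + s_count (n - 2) m {[2,1,1],[2,1,3]})"
  unfolding s_count_G using G1[OF assms] card_G2[OF assms] card_rec[OF assms] by simp


end
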